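(* Let $K$ be a field and let $\lambda_1,\dots,\lambda_n$ be pairwise relatively prime positive integers, $\boldsymbol{\lambda}=(\lambda_1,\dots,\lambda_n)$, and $\Lambda=\langle1/\lambda_1,\dots,1/\lambda_n\rangle$ the additive submonoid of $\mathbb{Q}_{\ge}$ they generate. Then $I(\boldsymbol{\lambda})\subseteq K[x_1,\dots,x_n]$ is normal if and only if $\Lambda$ is quasinormal.
   Context: $I(\boldsymbol{\lambda})$ is the integral closure in $K[x_1,\dots,x_n]$ of $(x_1^{\lambda_1},\dots,x_n^{\lambda_n})$; an ideal is normal if all its positive powers are integrally closed. A submonoid $S$ of $\mathbb{Q}_{\ge}$ is quasinormal if whenever $x\in S$ and $x\ge p$ for a positive integer $p$, there exist $y_1,\dots,y_p\in S$ with $y_i\ge 1$ for all $i$ and $x=y_1+\cdots+y_p$. *)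

theory Defs
  imports Complex_Main "HOL-Library.Poly_Mapping"
begin

type_synonym ('n, 'k) mpoly = "('n \<Rightarrow>\<^sub>0 nat) \<Rightarrow>\<^sub>0 'k"

definition var_power :: "'n \<Rightarrow> nat \<Rightarrow> ('n, 'k::comm_ring_1) mpoly" where
  "var_power v e = Poly_Mapping.single (Poly_Mapping.single v e) 1"

definition is_ideal :: "'a::comm_ring_1 set \<Rightarrow> bool" where
  "is_ideal I \<longleftrightarrow> 0 \<in> I \<and> (\<forall>a\<in>I. \<forall>b\<in>I. a + b \<in> I) \<and> (\<forall>a\<in>I. \<forall>r. r * a \<in> I)"

definition ideal_gen :: "'a::comm_ring_1 set \<Rightarrow> 'a set" where
  "ideal_gen S = \<Inter>{I. is_ideal I \<and> S \<subseteq> I}"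

definition ideal_mult :: "'a::comm_ring_1 set \<Rightarrow> 'a set \<Rightarrow> 'a set" where
  "ideal_mult I J = ideal_gen {a * b | a b. a \<in> I \<and> b \<in> J}"

fun ideal_pow :: "'a::comm_ring_1 set \<Rightarrow> nat \<Rightarrow> 'a set" where
  "ideal_pow I 0 = UNIV"
| "ideal_pow I (Suc k) = ideal_mult I (ideal_pow I k)"

definition integral_over_ideal :: "'a::comm_ring_1 set \<Rightarrow> 'a \<Rightarrow> bool" where
  "integral_over_ideal I r \<longleftrightarrow>
     (\<exists>k\<ge>1. \<exists>a::nat \<Rightarrow> 'a. (\<forall>i\<in>{1..k}. a i \<in> ideal_pow I i) \<and>
        r ^ k + (\<Sum>i=1..k. a i * r ^ (k - i)) = 0)"

definition integral_closure :: "'a::comm_ring_1 set \<Rightarrow> 'a set" where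
  "integral_closure I = {r. integral_over_ideal I r}"

definition integrally_closed :: "'a::comm_ring_1 set \<Rightarrow> bool" where
  "integrally_closed I \<longleftrightarrow> integral_closure I = I"

definition normal_ideal :: "'a::comm_ring_1 set \<Rightarrow> bool" where
  "normal_ideal I \<longleftrightarrow> (\<forall>k\<ge>1. integrally_closed (ideal_pow I k))"

definition I_lambda :: "('n \<Rightarrow> nat) \<Rightarrow> ('n, 'k::comm_ring_1) mpoly set" where
  "I_lambda lam = integral_closure (ideal_gen (range (\<lambda>v. var_power v (lam v))))"

definition Lambda_monoid :: "('n::finite \<Rightarrow> nat) \<Rightarrow> rat set" where
  "Lambda_monoid lam = {(\<Sum>v\<in>UNIV. of_nat (c v) / of_nat (lam v)) | c. True}"

definition quasinormal :: "rat set \<Rightarrow> bool" where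
  "quasinormal S \<longleftrightarrow> (\<forall>x\<in>S. \<forall>p::nat. p \<ge> 1 \<longrightarrow> x \<ge> of_nat p \<longrightarrow>
      (\<exists>y::nat \<Rightarrow> rat. (\<forall>i<p. y i \<in> S \<and> y i \<ge> 1) \<and> x = (\<Sum>i<p. y i)))"

end

theory Submission
  imports Defs
begin


lemma is_ideal_gen: "is_ideal (ideal_gen S)"
  unfolding is_ideal_def ideal_gen_def by auto

lemma gen_sub: "S \<subseteq> ideal_gen S"
  unfolding ideal_gen_def by auto

lemma gen_least: "is_ideal I \<Longrightarrow> S \<subseteq> I \<Longrightarrow> ideal_gen S \<subseteq> I"
  unfolding ideal_gen_def by auto

lemma gen_mono: "S \<subseteq> T \<Longrightarrow> ideal_gen S \<subseteq> ideal_gen T"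
  unfolding ideal_gen_def by auto

lemma gen_mem: "x \<in> S \<Longrightarrow> x \<in> ideal_gen S"
  unfolding ideal_gen_def by auto

lemma mult_mem: "a \<in> I \<Longrightarrow> b \<in> J \<Longrightarrow> a * b \<in> ideal_mult I J"
  unfolding ideal_mult_def by (rule gen_mem) blast

lemma is_ideal_UNIV: "is_ideal UNIV"
  unfolding is_ideal_def by auto

lemma is_ideal_pow: "is_ideal (ideal_pow A k)"
  by (cases k) (auto simp: is_ideal_UNIV ideal_mult_def is_ideal_gen)

lemma ideal_0: "is_ideal I \<Longrightarrow> 0 \<in> I" unfolding is_ideal_def by auto
lemma ideal_add: "is_ideal I \<Longrightarrow> a \<in> I \<Longrightarrow> b \<in> I \<Longrightarrow> a + b \<in> I" unfolding is_ideal_def by auto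
lemma ideal_mult_l: "is_ideal I \<Longrightarrow> a \<in> I \<Longrightarrow> r * a \<in> I" unfolding is_ideal_def by auto
lemma ideal_mult_r: "is_ideal I \<Longrightarrow> a \<in> I \<Longrightarrow> a * r \<in> I"
  using ideal_mult_l[of I a r] by (simp add: mult.commute)
lemma ideal_uminus: "is_ideal I \<Longrightarrow> a \<in> I \<Longrightarrow> - a \<in> I"
  using ideal_mult_l[of I a "-1"] by simp
lemma ideal_sum: "is_ideal I \<Longrightarrow> (\<And>i. i \<in> F \<Longrightarrow> f i \<in> I) \<Longrightarrow> sum f F \<in> I"
  by (induction F rule: infinite_finite_induct) (auto intro: ideal_0 ideal_add)

lemma pow_Suc_mem: "a \<in> A \<Longrightarrow> b \<in> ideal_pow A k \<Longrightarrow> a * b \<in> ideal_pow A (Suc k)"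
  by (simp add: mult_mem)

lemma pow_mult: "x \<in> ideal_pow A m \<Longrightarrow> y \<in> ideal_pow A m' \<Longrightarrow> x * y \<in> ideal_pow A (m + m')"
proof (induction m arbitrary: x)
  case 0
  then show ?case using ideal_mult_l[OF is_ideal_pow] by simp
next
  case (Suc m)
  let ?T = "{x. x * y \<in> ideal_pow A (Suc m + m')}"
  have "is_ideal ?T"
    using is_ideal_pow[of A "Suc m + m'"] unfolding is_ideal_def
    by (auto simp: distrib_right mult.assoc)
  moreover have "{a * b |a b. a \<in> A \<and> b \<in> ideal_pow A m} \<subseteq> ?T"
  proof clarify
    fix a b assume "a \<in> A" "b \<in> ideal_pow A m"
    then have "a * (b * y) \<in> ideal_pow A (Suc (m + m'))"
      using Suc.IH Suc.prems(2) pow_Suc_mem by blast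
    then show "a * b * y \<in> ideal_pow A (Suc m + m')" by (simp add: mult.assoc del: ideal_pow.simps)
  qed
  ultimately have "ideal_pow A (Suc m) \<subseteq> ?T"
    by (simp add: ideal_mult_def gen_least)
  then show ?case using Suc.prems by auto
qed

lemma pow_one_sub: "A \<subseteq> ideal_pow A 1"
proof
  fix a assume "a \<in> A"
  then have "a * 1 \<in> ideal_pow A 1" using pow_Suc_mem[of a A 1 0] by simp
  then show "a \<in> ideal_pow A 1" by simp
qed

lemma pow_anti_Suc: "ideal_pow A (Suc k) \<subseteq> ideal_pow A k"
proof (induction k)
  case 0 then show ?case by simp
next
  case (Suc k)
  then show ?case
    unfolding ideal_pow.simps(2)[of A "Suc k"] ideal_pow.simps(2)[of A k] ideal_mult_def
    by (intro gen_mono) blast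
qed

lemma pow_anti: "m \<le> n \<Longrightarrow> ideal_pow A n \<subseteq> ideal_pow A m"
proof (induction n)
  case 0 then show ?case by simp
next
  case (Suc n)
  then show ?case using pow_anti_Suc[of A n] by (cases "m = Suc n") auto
qed

lemma pow_power: "x \<in> A \<Longrightarrow> x ^ n \<in> ideal_pow A n"
proof (induction n)
  case 0 then show ?case by simp
next
  case (Suc n)
  then show ?case using pow_Suc_mem[of x A "x^n" n] by simp
qed

lemma pow_prod: "finite F \<Longrightarrow> (\<And>i. i \<in> F \<Longrightarrow> g i \<in> ideal_pow A (n i)) \<Longrightarrow>
   prod g F \<in> ideal_pow A (sum n F)"
proof (induction F rule: finite_induct)
  case empty then show ?case by simp
next
  case (insert x F)
  then show ?case using pow_mult[of "g x" A "n x" "prod g F" "sum n F"] by simp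
qed

lemma pow_add_sub: "ideal_pow A (i + k) \<subseteq> ideal_mult (ideal_pow A i) (ideal_pow A k)"
proof (induction i)
  case 0
  have "y \<in> ideal_mult UNIV (ideal_pow A k)" if "y \<in> ideal_pow A k" for y
    using mult_mem[of 1 UNIV y] that by simp
  then show ?case by auto
next
  case (Suc i)
  let ?G = "ideal_mult (ideal_pow A (Suc i)) (ideal_pow A k)"
  have G: "is_ideal ?G" by (simp add: ideal_mult_def is_ideal_gen)
  have "a * z \<in> ?G" if a: "a \<in> A" and z: "z \<in> ideal_pow A (i + k)" for a z
  proof -
    let ?T = "{z. a * z \<in> ?G}"
    have "is_ideal ?T" using G unfolding is_ideal_def by (auto simp: distrib_left mult.left_commute)
    moreover have "{x * y |x y. x \<in> ideal_pow A i \<and> y \<in> ideal_pow A k} \<subseteq> ?T"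
    proof clarify
      fix x y assume "x \<in> ideal_pow A i" "y \<in> ideal_pow A k"
      then have "(a * x) * y \<in> ?G" using pow_Suc_mem[OF a] mult_mem by blast
      then show "a * (x * y) \<in> ?G" by (simp add: mult.assoc)
    qed
    ultimately have "ideal_mult (ideal_pow A i) (ideal_pow A k) \<subseteq> ?T"
      unfolding ideal_mult_def[of "ideal_pow A i"] by (rule gen_least)
    then show ?thesis using Suc.IH z by auto
  qed
  then have "{a * z |a z. a \<in> A \<and> z \<in> ideal_pow A (i + k)} \<subseteq> ?G" by blast
  then have "ideal_mult A (ideal_pow A (i + k)) \<subseteq> ?G"
    unfolding ideal_mult_def[of A] using G by (rule gen_least[rotated])
  then show ?case by simp
qed

lemma pow_pow: "ideal_pow A (i * j) \<subseteq> ideal_pow (ideal_pow A i) j"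
proof (induction j)
  case 0 then show ?case by simp
next
  case (Suc j)
  have "ideal_pow A (i * Suc j) \<subseteq> ideal_mult (ideal_pow A i) (ideal_pow A (i * j))"
    using pow_add_sub[of A i "i * j"] by (simp add: algebra_simps)
  also have "\<dots> \<subseteq> ideal_mult (ideal_pow A i) (ideal_pow (ideal_pow A i) j)"
    unfolding ideal_mult_def using Suc.IH by (intro gen_mono) blast
  finally show ?case by simp
qed

lemma pow_mono_set: "A \<subseteq> B \<Longrightarrow> ideal_pow A k \<subseteq> ideal_pow B k"
proof (induction k)
  case 0 then show ?case by simp
next
  case (Suc k) then show ?case unfolding ideal_pow.simps ideal_mult_def by (intro gen_mono) blast
qed

lemma closure_sup: "integral_closure A \<supseteq> A"
proof
  fix r assume r: "r \<in> A"
  have "-r \<in> ideal_pow A 1"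
    using pow_one_sub[of A] r ideal_uminus[OF is_ideal_pow[of A 1]] by auto
  then have "integral_over_ideal A r"
    unfolding integral_over_ideal_def by (intro exI[of _ 1] conjI exI[of _ "\<lambda>_. -r"]) auto
  then show "r \<in> integral_closure A" by (simp add: integral_closure_def)
qed




definition rk :: "('n \<Rightarrow> nat) \<Rightarrow> ('n::finite \<Rightarrow>\<^sub>0 nat) \<Rightarrow> (nat \<Rightarrow>\<^sub>0 nat)" where
  "rk e a = Abs_poly_mapping (\<lambda>i. if i \<in> range e then Poly_Mapping.lookup a (inv e i) else 0)"

lemma lookup_rk: "Poly_Mapping.lookup (rk e a) i = (if i \<in> range e then Poly_Mapping.lookup a (inv e i) else 0)"
proof -
  have "finite {i. (if i \<in> range e then Poly_Mapping.lookup a (inv e i) else 0) \<noteq> 0}"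
    by (rule finite_subset[of _ "range e"]) auto
  then show ?thesis unfolding rk_def by simp
qed

lemma rk_add: "rk e (a + b) = rk e a + rk e b"
  by (rule poly_mapping_eqI) (simp add: lookup_rk lookup_add)

lemma rk_inj: "inj e \<Longrightarrow> rk e a = rk e b \<Longrightarrow> a = b"
proof (rule poly_mapping_eqI)
  fix v assume "inj e" "rk e a = rk e b"
  then have "Poly_Mapping.lookup (rk e a) (e v) = Poly_Mapping.lookup (rk e b) (e v)" by simp
  then show "Poly_Mapping.lookup a v = Poly_Mapping.lookup b v" using \<open>inj e\<close> by (simp add: lookup_rk)
qed

lemma ex_inj_nat: "\<exists>e::'n::finite \<Rightarrow> nat. inj e"
  using finite_imp_inj_to_nat_seg[of "UNIV :: 'n set"] by auto

lemma lookup_mult_unique: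
  fixes f g :: "('a::cancel_comm_monoid_add) \<Rightarrow>\<^sub>0 ('b::comm_ring_1)"
  assumes uniq: "\<And>a b. a \<in> Poly_Mapping.keys f \<Longrightarrow> b \<in> Poly_Mapping.keys g \<Longrightarrow> a + b = a0 + b0 \<Longrightarrow> a = a0 \<and> b = b0"
  shows "Poly_Mapping.lookup (f * g) (a0 + b0) = Poly_Mapping.lookup f a0 * Poly_Mapping.lookup g b0"
proof -
  define s1 where "s1 = Poly_Mapping.single a0 (Poly_Mapping.lookup f a0)"
  define s2 where "s2 = Poly_Mapping.single b0 (Poly_Mapping.lookup g b0)"
  define f1 where "f1 = f - s1"
  define g1 where "g1 = g - s2"
  have kf1: "Poly_Mapping.keys f1 \<subseteq> Poly_Mapping.keys f - {a0}"
    by (auto simp: f1_def s1_def in_keys_iff lookup_minus lookup_single)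
  have kg1: "Poly_Mapping.keys g1 \<subseteq> Poly_Mapping.keys g - {b0}"
    by (auto simp: g1_def s2_def in_keys_iff lookup_minus lookup_single)
  have ks1: "Poly_Mapping.keys s1 \<subseteq> Poly_Mapping.keys f" by (auto simp: s1_def in_keys_iff)
  have ks2: "Poly_Mapping.keys s2 \<subseteq> Poly_Mapping.keys g" by (auto simp: s2_def in_keys_iff)
  have z: "Poly_Mapping.lookup (x * y) (a0 + b0) = 0"
    if "Poly_Mapping.keys x \<subseteq> Poly_Mapping.keys f" "Poly_Mapping.keys y \<subseteq> Poly_Mapping.keys g" "a0 \<notin> Poly_Mapping.keys x \<or> b0 \<notin> Poly_Mapping.keys y" for x y
  proof -
    have "a0 + b0 \<notin> Poly_Mapping.keys (x * y)"
    proof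
      assume "a0 + b0 \<in> Poly_Mapping.keys (x * y)"
      then obtain a b where "a \<in> Poly_Mapping.keys x" "b \<in> Poly_Mapping.keys y" "a0 + b0 = a + b"
        using keys_mult[of x y] by blast
      then show False using uniq[of a b] that by auto
    qed
    then show ?thesis by (simp add: in_keys_iff)
  qed
  have "f * g = s1 * s2 + s1 * g1 + f1 * s2 + f1 * g1"
    by (simp add: f1_def g1_def algebra_simps)
  moreover have "Poly_Mapping.lookup (s1 * g1) (a0 + b0) = 0" by (rule z) (use ks1 kg1 in auto)
  moreover have "Poly_Mapping.lookup (f1 * s2) (a0 + b0) = 0" by (rule z) (use ks2 kf1 in auto)
  moreover have "Poly_Mapping.lookup (f1 * g1) (a0 + b0) = 0" by (rule z) (use kg1 kf1 in auto)
  ultimately have "Poly_Mapping.lookup (f * g) (a0 + b0) = Poly_Mapping.lookup (s1 * s2) (a0 + b0)"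
    by (simp add: lookup_add)
  also have "\<dots> = Poly_Mapping.lookup f a0 * Poly_Mapping.lookup g b0"
    by (simp add: s1_def s2_def mult_single)
  finally show ?thesis .
qed

locale lamset =
  fixes lam :: "'n::finite \<Rightarrow> nat"
  assumes pos: "\<And>v. lam v > 0"
begin

definition wt :: "('n \<Rightarrow>\<^sub>0 nat) \<Rightarrow> rat" where
  "wt a = (\<Sum>v\<in>UNIV. of_nat (Poly_Mapping.lookup a v) / of_nat (lam v))"

lemma wt_add: "wt (a + b) = wt a + wt b"
  by (simp add: wt_def lookup_add sum.distrib add_divide_distrib)

lemma wt_nonneg: "0 \<le> wt a"
  by (simp add: wt_def sum_nonneg)

lemma wt_zero[simp]: "wt 0 = 0"
  by (simp add: wt_def)

lemma wt_single: "wt (Poly_Mapping.single v n) = of_nat n / of_nat (lam v)"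
proof -
  have "wt (Poly_Mapping.single v n) = (\<Sum>w\<in>UNIV. if w = v then of_nat n / of_nat (lam v) else 0)"
    unfolding wt_def by (intro sum.cong) (auto simp: lookup_single when_def)
  then show ?thesis by simp
qed

lemma wt_sum: "wt (sum b F) = (\<Sum>j\<in>F. wt (b j))"
  by (induction F rule: infinite_finite_induct) (auto simp: wt_add)

definition G :: "rat \<Rightarrow> ('n, 'k::field) mpoly set" where
  "G q = {f. \<forall>a\<in>Poly_Mapping.keys f. q \<le> wt a}"

definition Gs :: "rat \<Rightarrow> ('n, 'k::field) mpoly set" where
  "Gs q = {f. \<forall>a\<in>Poly_Mapping.keys f. q < wt a}"

lemma G_mult: "f \<in> G p \<Longrightarrow> g \<in> G q \<Longrightarrow> f * g \<in> G (p + q)"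
  unfolding G_def using keys_mult[of f g] by (force simp: wt_add intro: add_mono)

lemma Gs_mult: "f \<in> G p \<Longrightarrow> g \<in> Gs q \<Longrightarrow> f * g \<in> Gs (p + q)"
  unfolding G_def Gs_def using keys_mult[of f g] by (force simp: wt_add intro: add_le_less_mono)

lemma G_zero: "G 0 = UNIV"
  unfolding G_def using wt_nonneg by auto

lemma G_ideal: "is_ideal (G q :: ('n, 'k::field) mpoly set)"
  unfolding is_ideal_def
proof (intro conjI ballI allI)
  show "0 \<in> G q" by (simp add: G_def)
  fix a b :: "('n, 'k) mpoly" assume "a \<in> G q" "b \<in> G q"
  then show "a + b \<in> G q" using keys_add[of a b] by (auto simp: G_def)
next
  fix a r :: "('n, 'k) mpoly" assume "a \<in> G q"
  then show "r * a \<in> G q" using G_mult[of r 0 a q] G_zero by auto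
qed

lemma Gs_ideal: "is_ideal (Gs q :: ('n, 'k::field) mpoly set)"
  unfolding is_ideal_def
proof (intro conjI ballI allI)
  show "0 \<in> Gs q" by (simp add: Gs_def)
  fix a b :: "('n, 'k) mpoly" assume "a \<in> Gs q" "b \<in> Gs q"
  then show "a + b \<in> Gs q" using keys_add[of a b] by (auto simp: Gs_def)
next
  fix a r :: "('n, 'k) mpoly" assume "a \<in> Gs q"
  then show "r * a \<in> Gs q" using Gs_mult[of r 0 a q] G_zero by auto
qed

lemma G_Gs: "p < q \<Longrightarrow> G q \<subseteq> Gs p"
  unfolding G_def Gs_def by force

lemma exact_mult:
  assumes f: "f \<in> G p" "f \<notin> Gs p" and g: "g \<in> G q" "g \<notin> Gs q"
  shows "(f * g :: ('n, 'k::field) mpoly) \<notin> Gs (p + q)"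
proof -
  obtain e :: "'n \<Rightarrow> nat" where e: "inj e" using ex_inj_nat by blast
  define Sf where "Sf = {a \<in> Poly_Mapping.keys f. wt a = p}"
  define Sg where "Sg = {a \<in> Poly_Mapping.keys g. wt a = q}"
  have Sf: "finite Sf" "Sf \<noteq> {}" using f unfolding Sf_def G_def Gs_def by force+
  have Sg: "finite Sg" "Sg \<noteq> {}" using g unfolding Sg_def G_def Gs_def by force+
  have "Max (rk e ` Sf) \<in> rk e ` Sf" using Sf by simp
  then obtain a0 where a0: "a0 \<in> Sf" "rk e a0 = Max (rk e ` Sf)" by auto
  have "Max (rk e ` Sg) \<in> rk e ` Sg" using Sg by simp
  then obtain b0 where b0: "b0 \<in> Sg" "rk e b0 = Max (rk e ` Sg)" by auto
  have uniq: "a = a0 \<and> b = b0" if ab: "a \<in> Poly_Mapping.keys f" "b \<in> Poly_Mapping.keys g" "a + b = a0 + b0" for a b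
  proof -
    have "wt a + wt b = p + q" using ab(3) a0 b0 by (metis (mono_tags, lifting) Sf_def Sg_def mem_Collect_eq wt_add)
    moreover have "p \<le> wt a" "q \<le> wt b" using ab f g by (auto simp: G_def)
    ultimately have "a \<in> Sf" "b \<in> Sg" using ab by (auto simp: Sf_def Sg_def)
    then have le: "rk e a \<le> rk e a0" "rk e b \<le> rk e b0" using a0 b0 Sf Sg by auto
    have sum: "rk e a + rk e b = rk e a0 + rk e b0" using ab(3) by (metis rk_add)
    have "rk e a = rk e a0"
    proof (rule ccontr)
      assume "rk e a \<noteq> rk e a0"
      then have "rk e a < rk e a0" using le by auto
      then have "rk e a + rk e b < rk e a0 + rk e b0" using le(2) by (rule add_less_le_mono)
      then show False using sum by simp
    qed
    then have "a = a0" using rk_inj[OF e] by blast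
    then show ?thesis using ab(3) by simp
  qed
  have "Poly_Mapping.lookup (f * g) (a0 + b0) = Poly_Mapping.lookup f a0 * Poly_Mapping.lookup g b0"
    by (rule lookup_mult_unique) (use uniq in blast)
  moreover have "Poly_Mapping.lookup f a0 \<noteq> 0" "Poly_Mapping.lookup g b0 \<noteq> 0" using a0 b0 by (auto simp: Sf_def Sg_def in_keys_iff)
  ultimately have "a0 + b0 \<in> Poly_Mapping.keys (f * g)" by (simp add: in_keys_iff)
  moreover have "wt (a0 + b0) = p + q" using a0 b0 by (simp add: Sf_def Sg_def wt_add)
  ultimately show ?thesis unfolding Gs_def by force
qed

end



context lamset begin

lemma one_exact: "(1 :: ('n, 'k::field) mpoly) \<in> G 0" "(1 :: ('n, 'k::field) mpoly) \<notin> Gs 0"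
  by (auto simp: G_zero Gs_def)

lemma closure_G:
  assumes A: "\<And>i. i \<ge> 1 \<Longrightarrow> ideal_pow A i \<subseteq> (G (of_nat i * q) :: ('n, 'k::field) mpoly set)"
    and r: "integral_over_ideal A r"
  shows "r \<in> G q"
proof (rule ccontr)
  assume nr: "r \<notin> G q"
  then obtain a1 where a1: "a1 \<in> Poly_Mapping.keys r" "wt a1 < q" by (auto simp: G_def not_le)
  define ov where "ov = Min (wt ` Poly_Mapping.keys r)"
  have fin: "finite (wt ` Poly_Mapping.keys r)" "wt ` Poly_Mapping.keys r \<noteq> {}" using a1 by auto
  have "ov \<le> wt a1" unfolding ov_def using fin a1 by auto
  with a1 have ovq: "ov < q" by simp
  have rG: "r \<in> G ov" unfolding G_def ov_def using fin by auto
  have "ov \<in> wt ` Poly_Mapping.keys r" unfolding ov_def using fin by (rule Min_in)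
  then have rGs: "r \<notin> Gs ov" unfolding Gs_def by auto
  have pw: "r ^ m \<in> G (of_nat m * ov) \<and> r ^ m \<notin> Gs (of_nat m * ov)" for m
  proof (induction m)
    case 0 then show ?case using one_exact by simp
  next
    case (Suc m)
    have e: "of_nat (Suc m) * ov = ov + of_nat m * ov" by (simp add: algebra_simps)
    show ?case unfolding e power_Suc
      using G_mult[OF rG] exact_mult[OF rG rGs] Suc.IH by blast
  qed
  from r obtain K a where K: "K \<ge> 1" and a: "\<forall>i\<in>{1..K}. a i \<in> ideal_pow A i"
    and eq: "r ^ K + (\<Sum>i=1..K. a i * r ^ (K - i)) = 0"
    unfolding integral_over_ideal_def by blast
  have terms: "a i * r ^ (K - i) \<in> Gs (of_nat K * ov)" if i: "i \<in> {1..K}" for i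
  proof -
    have "a i \<in> G (of_nat i * q)" using a i A[of i] by auto
    then have "a i * r ^ (K - i) \<in> G (of_nat i * q + of_nat (K - i) * ov)"
      using pw[of "K - i"] G_mult by blast
    moreover have "of_nat K * ov < of_nat i * q + of_nat (K - i) * ov"
    proof -
      have "of_nat (K - i) = (of_nat K - of_nat i :: rat)" using i by (simp add: of_nat_diff)
      moreover have "of_nat i * ov < of_nat i * q" using i ovq by (intro mult_strict_left_mono) auto
      ultimately show ?thesis by (simp add: algebra_simps)
    qed
    ultimately show ?thesis using G_Gs by blast
  qed
  have "(\<Sum>i=1..K. a i * r ^ (K - i)) \<in> Gs (of_nat K * ov)"
    by (rule ideal_sum[OF Gs_ideal]) (use terms in blast)
  then have "- (\<Sum>i=1..K. a i * r ^ (K - i)) \<in> Gs (of_nat K * ov)"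
    by (rule ideal_uminus[OF Gs_ideal])
  moreover have "r ^ K = - (\<Sum>i=1..K. a i * r ^ (K - i))" using eq by (simp add: eq_neg_iff_add_eq_0)
  ultimately show False using pw[of K] by simp
qed

lemma pow_G: "A \<subseteq> (G q :: ('n, 'k::field) mpoly set) \<Longrightarrow> ideal_pow A i \<subseteq> G (of_nat i * q)"
proof (induction i)
  case 0 then show ?case by (simp add: G_zero)
next
  case (Suc i)
  have "{a * b |a b. a \<in> A \<and> b \<in> ideal_pow A i} \<subseteq> G (of_nat (Suc i) * q)"
  proof clarify
    fix a b assume "a \<in> A" "b \<in> ideal_pow A i"
    then have "a * b \<in> G (q + of_nat i * q)" using Suc G_mult by blast
    then show "a * b \<in> G (of_nat (Suc i) * q)" by (simp add: algebra_simps)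
  qed
  then show ?case unfolding ideal_pow.simps ideal_mult_def by (rule gen_least[OF G_ideal])
qed

lemma closure_G2:
  assumes "A \<subseteq> (G q :: ('n, 'k::field) mpoly set)" shows "integral_closure A \<subseteq> G q"
proof
  fix r assume "r \<in> integral_closure A"
  then show "r \<in> G q" using closure_G[of A q r] pow_G[OF assms] by (simp add: integral_closure_def)
qed

definition Jl :: "('n, 'k::field) mpoly set" where
  "Jl = ideal_gen (range (\<lambda>v. var_power v (lam v)))"

lemma var_power_G: "var_power v (lam v) \<in> (G 1 :: ('n, 'k::field) mpoly set)"
  using pos[of v] by (simp add: var_power_def G_def wt_single)

lemma Jl_G: "(Jl :: ('n, 'k::field) mpoly set) \<subseteq> G 1"
  unfolding Jl_def by (rule gen_least[OF G_ideal]) (use var_power_G in blast)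

lemma Il_G: "(I_lambda lam :: ('n, 'k::field) mpoly set) \<subseteq> G 1"
  unfolding I_lambda_def using closure_G2[OF Jl_G] by (simp add: Jl_def)

lemma Ilpow_G: "ideal_pow (I_lambda lam :: ('n, 'k::field) mpoly set) k \<subseteq> G (of_nat k)"
  using pow_G[OF Il_G, of k] by simp

lemma Ilpow_closure_G: "integral_closure (ideal_pow (I_lambda lam :: ('n, 'k::field) mpoly set) k) \<subseteq> G (of_nat k)"
  by (rule closure_G2[OF Ilpow_G])

end



definition mon :: "('n::finite \<Rightarrow> nat) \<Rightarrow> ('n \<Rightarrow>\<^sub>0 nat)" where
  "mon c = Abs_poly_mapping c"

lemma lookup_mon[simp]: "Poly_Mapping.lookup (mon c) = c"
  unfolding mon_def by (rule Abs_poly_mapping_inverse) simp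

lemma mon_lookup[simp]: "mon (Poly_Mapping.lookup a) = a"
  unfolding mon_def by (rule lookup_inverse)

lemma mon_add: "mon (\<lambda>v. c v + d v) = mon c + mon d"
  by (rule poly_mapping_eqI) (simp add: lookup_add)

lemma single_eq_mon: "Poly_Mapping.single v l = mon (\<lambda>u. if u = v then l else 0)"
  by (rule poly_mapping_eqI) (simp add: lookup_single when_def)

lemma single_mon_pow:
  "(Poly_Mapping.single (mon c) (1::'k::comm_ring_1)) ^ m = Poly_Mapping.single (mon (\<lambda>v. m * c v)) 1"
proof (induction m)
  case 0 then show ?case by (simp add: mon_def)
next
  case (Suc m)
  have "mon (\<lambda>v. Suc m * c v) = mon c + mon (\<lambda>v. m * c v)"
    by (simp add: mon_add[symmetric])
  then show ?case using Suc by (simp add: mult_single)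
qed

lemma single_sum_prod:
  "finite F \<Longrightarrow> Poly_Mapping.single (sum b F) (1::'k::comm_ring_1) = (\<Prod>j\<in>F. Poly_Mapping.single (b j) 1)"
proof (induction F rule: finite_induct)
  case (insert x F)
  have "Poly_Mapping.single (b x + sum b F) (1::'k) = Poly_Mapping.single (b x) 1 * Poly_Mapping.single (sum b F) 1"
    by (simp add: mult_single)
  then show ?case using insert by simp
qed simp

lemma single_mon_sum_prod:
  "finite F \<Longrightarrow> Poly_Mapping.single (mon (\<lambda>u. \<Sum>v\<in>F. e v u)) (1::'k::comm_ring_1)
     = (\<Prod>v\<in>F. Poly_Mapping.single (mon (e v)) 1)"
proof (induction F rule: finite_induct)
  case empty then show ?case by (simp add: mon_def)
next
  case (insert x F)
  have "mon (\<lambda>u. \<Sum>v\<in>insert x F. e v u) = mon (e x) + mon (\<lambda>u. \<Sum>v\<in>F. e v u)"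
    using insert by (simp add: mon_add[symmetric])
  moreover have "Poly_Mapping.single (mon (e x) + mon (\<lambda>u. \<Sum>v\<in>F. e v u)) (1::'k)
     = Poly_Mapping.single (mon (e x)) 1 * Poly_Mapping.single (mon (\<lambda>u. \<Sum>v\<in>F. e v u)) 1"
    by (simp add: mult_single)
  ultimately show ?case using insert by simp
qed

lemma integral_of_power:
  assumes "N \<ge> 1" "r ^ N \<in> ideal_pow A N"
  shows "integral_over_ideal A r"
proof -
  define a where "a = (\<lambda>i. if i = N then uminus (r ^ N) else 0)"
  have 1: "\<forall>i\<in>{1..N}. a i \<in> ideal_pow A i"
    using assms(2) by (auto simp: a_def intro: ideal_uminus ideal_0 is_ideal_pow)
  have "(\<Sum>i=1..N. a i * r ^ (N - i)) = (\<Sum>i=1..N. if i = N then uminus (r ^ N) else 0)"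
    by (rule sum.cong) (auto simp: a_def)
  also have "\<dots> = uminus (r ^ N)" using assms(1) by simp
  finally have 2: "r ^ N + (\<Sum>i=1..N. a i * r ^ (N - i)) = 0" by simp
  show ?thesis unfolding integral_over_ideal_def using assms(1) 1 2 by blast
qed

context lamset begin

lemma Lambda_iff: "x \<in> Lambda_monoid lam \<longleftrightarrow> (\<exists>c. x = wt (mon c))"
  by (simp add: Lambda_monoid_def wt_def)

lemma wt_in_Lambda: "wt a \<in> Lambda_monoid lam"
  using Lambda_iff[of "wt a"] mon_lookup[of a] by metis

lemma gens_prod:
  assumes gens: "\<And>v. var_power v (lam v) \<in> (B :: ('n, 'k::field) mpoly set)"
  shows "Poly_Mapping.single (mon (\<lambda>u. c u * lam u)) 1 \<in> ideal_pow B (\<Sum>u\<in>UNIV. c u)"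
proof -
  define e where "e v = (\<lambda>u. if u = v then c v * lam v else 0)" for v
  have "(\<lambda>u. c u * lam u) = (\<lambda>u. \<Sum>v\<in>UNIV. e v u)" by (simp add: e_def)
  then have "Poly_Mapping.single (mon (\<lambda>u. c u * lam u)) (1::'k) = (\<Prod>v\<in>UNIV. Poly_Mapping.single (mon (e v)) 1)"
    using single_mon_sum_prod[of UNIV e] by simp
  also have "\<dots> = (\<Prod>v\<in>UNIV. (var_power v (lam v)) ^ c v)"
  proof (rule prod.cong)
    fix v :: 'n
    have "var_power v (lam v) ^ c v = (Poly_Mapping.single (mon (\<lambda>u. if u = v then lam v else 0)) (1::'k)) ^ c v"
      by (simp add: var_power_def single_eq_mon)
    also have "\<dots> = Poly_Mapping.single (mon (e v)) 1"
      unfolding single_mon_pow e_def by (rule arg_cong[where f = "\<lambda>x. Poly_Mapping.single (mon x) 1"]) (auto simp: fun_eq_iff)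
    finally show "Poly_Mapping.single (mon (e v)) (1::'k) = var_power v (lam v) ^ c v" by (rule sym)
  qed simp
  also have "\<dots> \<in> ideal_pow B (\<Sum>u\<in>UNIV. c u)"
    by (rule pow_prod) (auto intro: pow_power gens)
  finally show ?thesis .
qed

lemma mono_power_in:
  assumes gens: "\<And>v. var_power v (lam v) \<in> (B :: ('n, 'k::field) mpoly set)"
    and wa: "of_nat p \<le> wt a"
  defines "L \<equiv> (\<Prod>v\<in>UNIV. lam v)"
  shows "(Poly_Mapping.single a (1::'k)) ^ L \<in> ideal_pow B (p * L)"
proof -
  have Lpos: "L > 0" unfolding L_def using pos by (simp add: prod_pos)
  define c where "c u = Poly_Mapping.lookup a u * (L div lam u)" for u
  have dv: "lam u dvd L" for u unfolding L_def by (rule dvd_prodI) auto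
  have cl: "c u * lam u = L * Poly_Mapping.lookup a u" for u
    using dv[of u] by (simp add: c_def)
  have "(Poly_Mapping.single a (1::'k)) ^ L = Poly_Mapping.single (mon (\<lambda>v. L * Poly_Mapping.lookup a v)) 1"
    using single_mon_pow[of "Poly_Mapping.lookup a" L] by simp
  also have "\<dots> = Poly_Mapping.single (mon (\<lambda>u. c u * lam u)) 1" by (simp add: cl)
  also have "\<dots> \<in> ideal_pow B (\<Sum>u\<in>UNIV. c u)" by (rule gens_prod[OF gens])
  also have "\<dots> \<subseteq> ideal_pow B (p * L)"
  proof (rule pow_anti)
    have "of_nat (\<Sum>u\<in>UNIV. c u) = (\<Sum>u\<in>UNIV. of_nat (c u) :: rat)" by simp
    also have "\<dots> = (\<Sum>u\<in>UNIV. of_nat L * (of_nat (Poly_Mapping.lookup a u) / of_nat (lam u)) :: rat)"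
    proof (rule sum.cong)
      fix u :: 'n
      have "of_nat (c u) * of_nat (lam u) = (of_nat L * of_nat (Poly_Mapping.lookup a u) :: rat)"
        using cl[of u] by (metis of_nat_mult)
      then show "of_nat (c u) = (of_nat L * (of_nat (Poly_Mapping.lookup a u) / of_nat (lam u)) :: rat)"
        using pos[of u] by (simp add: field_simps)
    qed simp
    also have "\<dots> = of_nat L * wt a" by (simp add: wt_def sum_distrib_left)
    also have "\<dots> \<ge> of_nat L * of_nat p" using wa by (intro mult_left_mono) auto
    finally have "(of_nat (p * L) :: rat) \<le> of_nat (\<Sum>u\<in>UNIV. c u)" by (simp add: mult.commute)
    then show "p * L \<le> (\<Sum>u\<in>UNIV. c u)" by linarith
  qed
  finally show ?thesis .
qed

lemma L_pos: "(\<Prod>v\<in>UNIV. lam v) \<ge> 1"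
  using pos by (simp add: prod_pos Suc_le_eq)

end



context lamset begin

definition Dk :: "nat \<Rightarrow> ('n \<Rightarrow>\<^sub>0 nat) set" where
  "Dk k = {a. \<exists>b d. (\<forall>j<k. 1 \<le> wt (b j)) \<and> a = (\<Sum>j<k. b j) + d}"

lemma Dk_add: "a \<in> Dk k \<Longrightarrow> a + e \<in> Dk k"
proof -
  assume "a \<in> Dk k"
  then obtain b d where b: "\<forall>j<k. 1 \<le> wt (b j)" and ad: "a = (\<Sum>j<k. b j) + d"
    unfolding Dk_def by blast
  then have "a + e = (\<Sum>j<k. b j) + (d + e)" by (simp add: add.assoc)
  with b show ?thesis unfolding Dk_def by blast
qed

lemma Dk_0: "a \<in> Dk 0"
proof -
  have "a = (\<Sum>j<0. (\<lambda>_. 0) j) + a" by simp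
  then show ?thesis unfolding Dk_def by blast
qed

lemma Dk_Suc:
  assumes e: "1 \<le> wt e" and a: "a \<in> Dk k" shows "e + a \<in> Dk (Suc k)"
proof -
  obtain b d where b: "\<forall>j<k. 1 \<le> wt (b j)" and ad: "a = (\<Sum>j<k. b j) + d"
    using a unfolding Dk_def by blast
  define b' where "b' = b(k := e)"
  have "(\<Sum>j<Suc k. b' j) = (\<Sum>j<k. b j) + e"
    by (simp add: b'_def)
  moreover have "\<forall>j<Suc k. 1 \<le> wt (b' j)" using b e by (auto simp: b'_def less_Suc_eq)
  ultimately have "e + a = (\<Sum>j<Suc k. b' j) + d \<and> (\<forall>j<Suc k. 1 \<le> wt (b' j))"
    using ad by (simp add: algebra_simps)
  then show ?thesis unfolding Dk_def by blast
qed

lemma crt: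
  assumes cop: "\<And>v w. v \<noteq> w \<Longrightarrow> coprime (lam v) (lam w)" and eq: "wt a = wt b"
  shows "int (lam u) dvd int (Poly_Mapping.lookup a u) - int (Poly_Mapping.lookup b u)"
proof -
  define P where "P v = (\<Prod>w\<in>UNIV-{v}. lam w)" for v
  define L where "L = (\<Prod>w\<in>UNIV. lam w)"
  have LP: "L = lam v * P v" for v unfolding L_def P_def by (simp add: prod.remove[of UNIV v])
  have key: "of_nat L * wt c = (of_nat (\<Sum>v\<in>UNIV. Poly_Mapping.lookup c v * P v) :: rat)" for c
  proof -
    have "of_nat L * wt c = (\<Sum>v\<in>UNIV. of_nat L * (of_nat (Poly_Mapping.lookup c v) / of_nat (lam v)) :: rat)"
      by (simp add: wt_def sum_distrib_left)
    also have "\<dots> = (\<Sum>v\<in>UNIV. of_nat (Poly_Mapping.lookup c v * P v))"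
    proof (rule sum.cong)
      fix v :: 'n
      have "lam v \<noteq> 0" using pos[of v] by simp
      then show "of_nat L * (of_nat (Poly_Mapping.lookup c v) / of_nat (lam v)) = (of_nat (Poly_Mapping.lookup c v * P v) :: rat)"
        by (simp add: LP[of v] field_simps)
    qed simp
    finally show ?thesis by simp
  qed
  have "(of_nat (\<Sum>v\<in>UNIV. Poly_Mapping.lookup a v * P v) :: rat) = of_nat (\<Sum>v\<in>UNIV. Poly_Mapping.lookup b v * P v)"
    using key[of a] key[of b] eq by simp
  then have "(\<Sum>v\<in>UNIV. Poly_Mapping.lookup a v * P v) = (\<Sum>v\<in>UNIV. Poly_Mapping.lookup b v * P v)"
    by (simp only: of_nat_eq_iff)
  then have "int (\<Sum>v\<in>UNIV. Poly_Mapping.lookup a v * P v) = int (\<Sum>v\<in>UNIV. Poly_Mapping.lookup b v * P v)"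
    by simp
  then have "(\<Sum>v\<in>UNIV. int (Poly_Mapping.lookup a v) * int (P v)) = (\<Sum>v\<in>UNIV. int (Poly_Mapping.lookup b v) * int (P v))"
    by (simp only: of_nat_sum of_nat_mult)
  then have z: "(\<Sum>v\<in>UNIV. (int (Poly_Mapping.lookup a v) - int (Poly_Mapping.lookup b v)) * int (P v)) = 0"
    by (simp add: left_diff_distrib sum_subtractf)
  define D where "D v = (int (Poly_Mapping.lookup a v) - int (Poly_Mapping.lookup b v)) * int (P v)" for v
  have "D u + (\<Sum>v\<in>UNIV-{u}. D v) = 0"
    using z unfolding D_def by (simp add: sum.remove[of UNIV u])
  moreover have "int (lam u) dvd (\<Sum>v\<in>UNIV-{u}. D v)"
  proof (rule dvd_sum)
    fix v assume "v \<in> UNIV - {u}"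
    then have "lam u dvd P v" unfolding P_def by (intro dvd_prodI) auto
    then have "int (lam u) dvd int (P v)" by simp
    then show "int (lam u) dvd D v" unfolding D_def by simp
  qed
  ultimately have "int (lam u) dvd - D u"
    by (simp add: eq_neg_iff_add_eq_0[symmetric] add_eq_0_iff2)
  then have "int (lam u) dvd D u" by (simp only: dvd_minus_iff)
  moreover have "coprime (int (lam u)) (int (P u))"
    unfolding coprime_int_iff P_def by (rule prod_coprime_right) (use cop in auto)
  ultimately show ?thesis unfolding D_def by (simp add: coprime_dvd_mult_left_iff)
qed

lemma box:
  assumes cop: "\<And>v w. v \<noteq> w \<Longrightarrow> coprime (lam v) (lam w)"
    and small: "\<And>u. Poly_Mapping.lookup a u < lam u" and eq: "wt c = wt a"
  shows "c = a"
proof -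
  have ge: "Poly_Mapping.lookup a u \<le> Poly_Mapping.lookup c u" for u
  proof -
    obtain t where t: "int (Poly_Mapping.lookup c u) - int (Poly_Mapping.lookup a u) = int (lam u) * t"
      using crt[OF cop eq, of u] by (auto elim: dvdE)
    have "t \<ge> 0"
    proof (rule ccontr)
      assume "\<not> t \<ge> 0"
      then have "int (lam u) * t \<le> int (lam u) * (-1)" by (intro mult_left_mono) auto
      then show False using t small[of u] by simp
    qed
    then have "int (lam u) * t \<ge> 0" by simp
    then show ?thesis using t by simp
  qed
  have "wt c - wt a = (\<Sum>u\<in>UNIV. (of_nat (Poly_Mapping.lookup c u) - of_nat (Poly_Mapping.lookup a u)) / of_nat (lam u))"
    by (simp add: wt_def diff_divide_distrib sum_subtractf)
  then have s0: "(\<Sum>u\<in>UNIV. (of_nat (Poly_Mapping.lookup c u) - of_nat (Poly_Mapping.lookup a u)) / (of_nat (lam u) :: rat)) = 0"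
    using eq by simp
  have "((\<Sum>u\<in>UNIV. (of_nat (Poly_Mapping.lookup c u) - of_nat (Poly_Mapping.lookup a u)) / (of_nat (lam u) :: rat)) = 0)
     \<longleftrightarrow> (\<forall>u\<in>UNIV. (of_nat (Poly_Mapping.lookup c u) - of_nat (Poly_Mapping.lookup a u)) / (of_nat (lam u) :: rat) = 0)"
    by (rule sum_nonneg_eq_0_iff) (use ge in auto)
  with s0 have "\<forall>u\<in>UNIV. (of_nat (Poly_Mapping.lookup c u) - of_nat (Poly_Mapping.lookup a u)) / (of_nat (lam u) :: rat) = 0"
    by blast
  then have "Poly_Mapping.lookup c u = Poly_Mapping.lookup a u" for u
    using pos[of u] by (metis (full_types) UNIV_I divide_eq_0_iff of_nat_eq_0_iff of_nat_eq_iff right_minus_eq not_gr_zero)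
  then show ?thesis by (intro poly_mapping_eqI) auto
qed

lemma decomp:
  assumes cop: "\<And>v w. v \<noteq> w \<Longrightarrow> coprime (lam v) (lam w)"
    and qn: "quasinormal (Lambda_monoid lam)"
  shows "of_nat k \<le> wt a \<Longrightarrow> a \<in> Dk k"
proof (induction k arbitrary: a)
  case 0 show ?case by (rule Dk_0)
next
  case (Suc k)
  show ?case
  proof (cases "\<exists>v. lam v \<le> Poly_Mapping.lookup a v")
    case True
    then obtain v where v: "lam v \<le> Poly_Mapping.lookup a v" by blast
    define a' where "a' = mon (\<lambda>u. Poly_Mapping.lookup a u - (if u = v then lam v else 0))"
    have aa: "a = Poly_Mapping.single v (lam v) + a'"
      by (rule poly_mapping_eqI) (use v in \<open>auto simp: a'_def lookup_add lookup_single when_def\<close>)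
    have w1: "wt (Poly_Mapping.single v (lam v)) = 1" using pos[of v] by (simp add: wt_single)
    then have "wt a = 1 + wt a'" using aa by (metis wt_add)
    then have "of_nat k \<le> wt a'" using Suc.prems by simp
    then have "a' \<in> Dk k" by (rule Suc.IH)
    then show ?thesis using aa Dk_Suc[of "Poly_Mapping.single v (lam v)" a' k] w1 by simp
  next
    case False
    then have small: "\<And>u. Poly_Mapping.lookup a u < lam u" by (simp add: not_le)
    have "\<forall>p::nat. p \<ge> 1 \<longrightarrow> wt a \<ge> of_nat p \<longrightarrow>
      (\<exists>y::nat \<Rightarrow> rat. (\<forall>i<p. y i \<in> Lambda_monoid lam \<and> y i \<ge> 1) \<and> wt a = (\<Sum>i<p. y i))"
      using qn wt_in_Lambda[of a] unfolding quasinormal_def by blast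
    then have "\<exists>y::nat \<Rightarrow> rat. (\<forall>i<Suc k. y i \<in> Lambda_monoid lam \<and> y i \<ge> 1) \<and> wt a = (\<Sum>i<Suc k. y i)"
      using Suc.prems by (simp del: sum.lessThan_Suc of_nat_Suc)
    then obtain y where y: "\<forall>i<Suc k. y i \<in> Lambda_monoid lam \<and> y i \<ge> 1" and sy: "wt a = (\<Sum>i<Suc k. y i)"
      by blast
    have "\<forall>i. \<exists>c. i < Suc k \<longrightarrow> y i = wt (mon c)" using y Lambda_iff by blast
    then have "\<exists>cf. \<forall>i. i < Suc k \<longrightarrow> y i = wt (mon (cf i))" by (rule choice)
    then obtain cf where cf: "\<forall>i. i < Suc k \<longrightarrow> y i = wt (mon (cf i))" by blast
    define b where "b i = mon (cf i)" for i
    have "wt (\<Sum>i<Suc k. b i) = (\<Sum>i<Suc k. y i)"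
      unfolding wt_sum b_def using cf by (intro sum.cong) auto
    then have "(\<Sum>i<Suc k. b i) = a" using box[OF cop small] sy by simp
    moreover have "\<forall>j<Suc k. 1 \<le> wt (b j)" using y cf b_def by auto
    ultimately have "a = (\<Sum>i<Suc k. b i) + 0 \<and> (\<forall>j<Suc k. 1 \<le> wt (b j))" by simp
    then show ?thesis unfolding Dk_def by blast
  qed
qed

definition Mk :: "nat \<Rightarrow> ('n, 'k::field) mpoly set" where
  "Mk k = {f. Poly_Mapping.keys f \<subseteq> Dk k}"

lemma Mk_ideal: "is_ideal (Mk k :: ('n, 'k::field) mpoly set)"
  unfolding is_ideal_def
proof (intro conjI ballI allI)
  show "0 \<in> Mk k" by (simp add: Mk_def)
  fix a b :: "('n, 'k) mpoly" assume "a \<in> Mk k" "b \<in> Mk k"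
  then show "a + b \<in> Mk k" using keys_add[of a b] by (auto simp: Mk_def)
next
  fix a r :: "('n, 'k) mpoly" assume a: "a \<in> Mk k"
  show "r * a \<in> Mk k" unfolding Mk_def mem_Collect_eq
  proof
    fix x assume "x \<in> Poly_Mapping.keys (r * a)"
    then obtain u w where "u \<in> Poly_Mapping.keys r" "w \<in> Poly_Mapping.keys a" "x = u + w"
      using keys_mult[of r a] by blast
    then show "x \<in> Dk k" using a Dk_add[of w k u] by (auto simp: Mk_def add.commute)
  qed
qed

lemma Mk_mult:
  assumes f: "f \<in> G 1" and g: "g \<in> Mk k" shows "(f * g :: ('n, 'k::field) mpoly) \<in> Mk (Suc k)"
  unfolding Mk_def mem_Collect_eq
proof
  fix x assume x: "x \<in> Poly_Mapping.keys (f * g)"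
  then obtain u w where "u \<in> Poly_Mapping.keys f" "w \<in> Poly_Mapping.keys g" "x = u + w"
    using keys_mult[of f g] by blast
  then show "x \<in> Dk (Suc k)" using f g Dk_Suc[of u w k] by (auto simp: G_def Mk_def)
qed

lemma pow_Mk: "A \<subseteq> (G 1 :: ('n, 'k::field) mpoly set) \<Longrightarrow> ideal_pow A k \<subseteq> Mk k"
proof (induction k)
  case 0 then show ?case by (auto simp: Mk_def Dk_0)
next
  case (Suc k)
  have "{a * b |a b. a \<in> A \<and> b \<in> ideal_pow A k} \<subseteq> Mk (Suc k)"
    using Suc Mk_mult by blast
  then show ?case unfolding ideal_pow.simps ideal_mult_def by (rule gen_least[OF Mk_ideal])
qed

end



lemma poly_expand: "f = (\<Sum>a\<in>Poly_Mapping.keys f. Poly_Mapping.single a (Poly_Mapping.lookup f a))"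
proof (rule poly_mapping_eqI)
  fix x
  have "Poly_Mapping.lookup (\<Sum>a\<in>Poly_Mapping.keys f. Poly_Mapping.single a (Poly_Mapping.lookup f a)) x
      = (\<Sum>a\<in>Poly_Mapping.keys f. if a = x then Poly_Mapping.lookup f a else 0)"
    by (simp add: lookup_sum lookup_single when_def)
  also have "\<dots> = Poly_Mapping.lookup f x"
    by (simp add: sum.delta' in_keys_iff)
  finally show "Poly_Mapping.lookup f x = Poly_Mapping.lookup (\<Sum>a\<in>Poly_Mapping.keys f. Poly_Mapping.single a (Poly_Mapping.lookup f a)) x"
    by simp
qed

theorem proposition4p7:
  fixes lam :: "'n::finite \<Rightarrow> nat"
  assumes pos: "\<And>v. lam v > 0"
    and coprime: "\<And>v w. v \<noteq> w \<Longrightarrow> coprime (lam v) (lam w)"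
  shows "normal_ideal (I_lambda lam :: ('n, 'k::field) mpoly set)
         \<longleftrightarrow> quasinormal (Lambda_monoid lam)"
proof -
  interpret lamset lam using pos by unfold_locales
  define L where "L = (\<Prod>v\<in>UNIV. lam v)"
  have L1: "L \<ge> 1" unfolding L_def by (rule L_pos)
  let ?I = "I_lambda lam :: ('n, 'k) mpoly set"
  have gensJ: "var_power v (lam v) \<in> (Jl :: ('n, 'k) mpoly set)" for v
    unfolding Jl_def by (rule gen_mem) auto
  have IJ: "?I = integral_closure Jl" by (simp add: I_lambda_def Jl_def)
  have gensI: "var_power v (lam v) \<in> ?I" for v
    unfolding IJ using closure_sup gensJ by blast
  have monoI: "Poly_Mapping.single b (1::'k) \<in> ?I" if b: "1 \<le> wt b" for b
  proof -
    have "(Poly_Mapping.single b (1::'k)) ^ L \<in> ideal_pow Jl (1 * L)"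
      unfolding L_def by (rule mono_power_in[OF gensJ]) (use b in simp)
    then have "integral_over_ideal Jl (Poly_Mapping.single b (1::'k))"
      using L1 by (intro integral_of_power[of L]) auto
    then show ?thesis unfolding IJ integral_closure_def by simp
  qed
  show ?thesis
  proof
    assume nor: "normal_ideal ?I"
    show "quasinormal (Lambda_monoid lam)"
      unfolding quasinormal_def
    proof (intro ballI allI impI)
      fix x p assume x: "x \<in> Lambda_monoid lam" and p: "(1::nat) \<le> p" and xp: "of_nat p \<le> x"
      obtain c where xc: "x = wt (mon c)" using x Lambda_iff by blast
      define a where "a = mon c"
      define r where "r = Poly_Mapping.single a (1::'k)"
      have "r ^ L \<in> ideal_pow ?I (p * L)"
        unfolding r_def L_def by (rule mono_power_in[OF gensI]) (use xp xc a_def in simp)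
      also have "\<dots> \<subseteq> ideal_pow (ideal_pow ?I p) L" by (rule pow_pow)
      finally have "integral_over_ideal (ideal_pow ?I p) r"
        using L1 by (intro integral_of_power[of L]) auto
      then have "r \<in> ideal_pow ?I p"
        using nor p unfolding normal_ideal_def integrally_closed_def integral_closure_def by auto
      then have "r \<in> Mk p" using pow_Mk[OF Il_G] by blast
      then have "a \<in> Dk p" by (simp add: Mk_def r_def)
      then obtain b d where b: "\<forall>j<p. 1 \<le> wt (b j)" and ad: "a = (\<Sum>j<p. b j) + d"
        unfolding Dk_def by blast
      obtain p' where pp: "p = Suc p'" using p by (cases p) auto
      define y where "y j = wt (if j = p' then b j + d else b j)" for j
      have "\<forall>i<p. y i \<in> Lambda_monoid lam \<and> 1 \<le> y i"
        using b wt_in_Lambda wt_nonneg by (auto simp: y_def wt_add pp add_increasing2)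
      moreover have "x = (\<Sum>i<p. y i)"
      proof -
        have "(\<Sum>i<p. y i) = (\<Sum>i<p'. wt (b i)) + wt (b p' + d)"
          unfolding pp sum.lessThan_Suc by (simp add: y_def)
        also have "\<dots> = (\<Sum>i<p. wt (b i)) + wt d" by (simp add: pp wt_add)
        also have "\<dots> = wt a" by (simp add: ad wt_add wt_sum)
        finally show ?thesis using xc a_def by simp
      qed
      ultimately show "\<exists>y::nat \<Rightarrow> rat. (\<forall>i<p. y i \<in> Lambda_monoid lam \<and> y i \<ge> 1) \<and> x = (\<Sum>i<p. y i)"
        by blast
    qed
  next
    assume qn: "quasinormal (Lambda_monoid lam)"
    show "normal_ideal ?I"
      unfolding normal_ideal_def integrally_closed_def
    proof (intro allI impI)
      fix k :: nat assume k: "k \<ge> 1"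
      have "G (of_nat k) \<subseteq> ideal_pow ?I k"
      proof
        fix f :: "('n, 'k) mpoly" assume f: "f \<in> G (of_nat k)"
        have mono: "Poly_Mapping.single a (1::'k) \<in> ideal_pow ?I k" if a: "a \<in> Poly_Mapping.keys f" for a
        proof -
          have "of_nat k \<le> wt a" using f a by (simp add: G_def)
          then have "a \<in> Dk k" using decomp[OF assms(2) qn, of k a] by blast
          then obtain b d where b: "\<forall>j<k. 1 \<le> wt (b j)" and ad: "a = (\<Sum>j<k. b j) + d"
            unfolding Dk_def by blast
          have "Poly_Mapping.single a (1::'k) = (\<Prod>j<k. Poly_Mapping.single (b j) 1) * Poly_Mapping.single d 1"
          proof -
            have "Poly_Mapping.single ((\<Sum>j<k. b j) + d) (1::'k) = Poly_Mapping.single (\<Sum>j<k. b j) 1 * Poly_Mapping.single d 1"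
              by (simp add: mult_single)
            moreover have "Poly_Mapping.single (\<Sum>j<k. b j) (1::'k) = (\<Prod>j<k. Poly_Mapping.single (b j) 1)"
              by (rule single_sum_prod) simp
            ultimately show ?thesis using ad by simp
          qed
          moreover have "(\<Prod>j<k. Poly_Mapping.single (b j) (1::'k)) \<in> ideal_pow ?I (\<Sum>j<k. 1)"
            by (rule pow_prod) (use b monoI pow_one_sub in blast)+
          ultimately show ?thesis by (auto intro: ideal_mult_r is_ideal_pow)
        qed
        have "(\<Sum>a\<in>Poly_Mapping.keys f. Poly_Mapping.single a (Poly_Mapping.lookup f a)) \<in> ideal_pow ?I k"
        proof (rule ideal_sum[OF is_ideal_pow])
          fix a assume a: "a \<in> Poly_Mapping.keys f"
          have "Poly_Mapping.single a (Poly_Mapping.lookup f a) = Poly_Mapping.single 0 (Poly_Mapping.lookup f a) * Poly_Mapping.single a 1"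
            by (simp add: mult_single)
          then show "Poly_Mapping.single a (Poly_Mapping.lookup f a) \<in> ideal_pow ?I k"
            using mono[OF a] by (auto intro: ideal_mult_l is_ideal_pow)
        qed
        then show "f \<in> ideal_pow ?I k" using poly_expand[of f] by simp
      qed
      then have "integral_closure (ideal_pow ?I k) \<subseteq> ideal_pow ?I k"
        using Ilpow_closure_G[of k] by blast
      then show "integral_closure (ideal_pow ?I k) = ideal_pow ?I k"
        using closure_sup by blast
    qed
  qed
qed


end
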